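(* Let $T\in\mathbb{N}$, let $\beta_1,\dots,\beta_T\in(0,1)$, set $\alpha_t=1-\beta_t$ and $\bar\alpha_t=\prod_{i=1}^t\alpha_i$, and let $\sigma_t\ge 0$ be such that $1-\bar\alpha_{t-1}-\sigma_t^2\ge 0$. Fix $t\in\{2,\dots,T\}$ and $\bm x_t\in\mathbb{R}^d$. For $\bm x_0\in\mathbb{R}^d$ let $$p(\bm x_{t-1}\mid \bm x_t,\bm x_0)=\mathcal{N}\Big(\bm x_{t-1};\ \sqrt{\bar\alpha_{t-1}}\,\bm x_0+\sqrt{1-\bar\alpha_{t-1}-\sigma_t^2}\,\tfrac{\bm x_t-\sqrt{\bar\alpha_t}\,\bm x_0}{\sqrt{1-\bar\alpha_t}},\ \sigma_t^2\mathbf{I}\Big).$$ Let the noise distribution be the Gaussian mixture $$p_\theta^\epsilon(\epsilon_t\mid \bm x_t)=\sum_{k=1}^K\pi_{\theta,k}\,\mathcal{N}\big(\epsilon_t;\bm\mu^\epsilon_{\theta,k}(\bm x_t,t),\bm\Sigma^\epsilon_{\theta,k}(\bm x_t,t)\big),$$ with $\pi_{\theta,k}\in[0,1]$, $\sum_k\pi_{\theta,k}=1$, means $\bm\mu^\epsilon_{\theta,k}(\bm x_t,t)\in\mathbb{R}^d$ and positive (semi-)definite covariances $\bm\Sigma^\epsilon_{\theta,k}(\bm x_t,t)$. Define the reverse distribution $$p_\theta(\bm x_{t-1}\mid\bm x_t)=\int_{\mathbb{R}^d} p\Big(\bm x_{t-1}\,\Big|\,\bm x_t,\ \bm x_0=\tfrac{\bm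 x_t-\sqrt{1-\bar\alpha_t}\,\epsilon_t}{\sqrt{\bar\alpha_t}}\Big)\,p_\theta^\epsilon(\epsilon_t\mid\bm x_t)\,d\epsilon_t .$$ Then $$p_\theta(\bm x_{t-1}\mid\bm x_t)=\sum_{k=1}^K\pi_{\theta,k}\,\mathcal{N}\Big(\bm x_{t-1};\ \sqrt{\bar\alpha_{t-1}}\,\hat{\bm x}_{0,k}+\lambda_t\,\bm\mu^\epsilon_{\theta,k}(\bm x_t,t),\ \gamma_t^2\,\bm\Sigma^\epsilon_{\theta,k}(\bm x_t,t)+\sigma_t^2\mathbf{I}\Big),$$ where $\hat{\bm x}_{0,k}=\frac{\bm x_t-\sqrt{1-\bar\alpha_t}\,\bm\mu^\epsilon_{\theta,k}(\bm x_t,t)}{\sqrt{\bar\alpha_t}}$, $\lambda_t=\sqrt{1-\bar\alpha_{t-1}-\sigma_t^2}$ and $\gamma_t=\lambda_t-\frac{\sqrt{1-\bar\alpha_t}}{\sqrt{\alpha_t}}$.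
   Context: This is the DDIM (denoising diffusion implicit model) framework: the forward noising satisfies $\bm x_t=\sqrt{\bar\alpha_t}\bm x_0+\sqrt{1-\bar\alpha_t}\,\epsilon_t$, so conditioning on $\bm x_0$ is equivalent to conditioning on the noise $\epsilon_t=(\bm x_t-\sqrt{\bar\alpha_t}\bm x_0)/\sqrt{1-\bar\alpha_t}$. The distribution $p_\theta^\epsilon(\cdot\mid\bm x_t)$ is a learned (neural-network-parametrized) model of the distribution of $\epsilon_t$ given $\bm x_t$. *)

theory Defs
  imports "HOL-Probability.Probability"
begin

definition alpha :: "(nat \<Rightarrow> real) \<Rightarrow> nat \<Rightarrow> real" where
  "alpha \<beta> t = 1 - \<beta> t"

definition alpha_bar :: "(nat \<Rightarrow> real) \<Rightarrow> nat \<Rightarrow> real" where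
  "alpha_bar \<beta> t = (\<Prod>i=1..t. alpha \<beta> i)"

definition psd :: "real^'n^'n \<Rightarrow> bool" where
  "psd S \<longleftrightarrow> transpose S = S \<and> (\<forall>v. 0 \<le> v \<bullet> (S *v v))"

definition std_gauss_vec :: "(real^'n) measure" where
  "std_gauss_vec = distr (PiM UNIV (\<lambda>_::'n. density lborel std_normal_density)) borel
      (\<lambda>f. \<chi> i. f i)"

text \<open>Gaussian measure N(mu, S) on R^n for a PSD covariance S (possibly degenerate):
  the law of mu + A z with z standard Gaussian and A A^T = S.\<close>
definition gauss_vec :: "real^'n \<Rightarrow> real^'n^'n \<Rightarrow> (real^'n) measure" where
  "gauss_vec m S = distr std_gauss_vec borel
      (\<lambda>z. m + (SOME A :: real^'n^'n. A ** transpose A = S) *v z)"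

definition mixture :: "nat \<Rightarrow> (nat \<Rightarrow> real) \<Rightarrow> (nat \<Rightarrow> (real^'n) measure) \<Rightarrow> (real^'n) measure" where
  "mixture K \<pi> M = measure_of UNIV (sets borel)
      (\<lambda>A. \<Sum>k=1..K. ennreal (\<pi> k) * emeasure (M k) A)"

definition ddim_cond :: "(nat \<Rightarrow> real) \<Rightarrow> (nat \<Rightarrow> real) \<Rightarrow> nat \<Rightarrow> real^'n \<Rightarrow> real^'n
    \<Rightarrow> (real^'n) measure" where
  "ddim_cond \<beta> \<sigma> t xt x0 = gauss_vec
      (sqrt (alpha_bar \<beta> (t-1)) *\<^sub>R x0
        + sqrt (1 - alpha_bar \<beta> (t-1) - (\<sigma> t)\<^sup>2)
            *\<^sub>R ((1 / sqrt (1 - alpha_bar \<beta> t)) *\<^sub>R (xt - sqrt (alpha_bar \<beta> t) *\<^sub>R x0)))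
      ((\<sigma> t)\<^sup>2 *\<^sub>R mat 1)"

end

theory Submission
  imports Defs
begin


lemma max_eigen:
  fixes s :: "'a::euclidean_space \<Rightarrow> 'a"
  assumes lin: "linear s" and sym: "\<And>x y. s x \<bullet> y = x \<bullet> s y"
    and V: "subspace V" and inv: "s ` V \<subseteq> V" and uV: "u \<in> V"
    and max: "\<And>x. x \<in> V \<Longrightarrow> x \<bullet> s x \<le> lam * (x \<bullet> x)"
    and ueq: "u \<bullet> s u = lam * (u \<bullet> u)"
  shows "s u = lam *\<^sub>R u"
proof -
  define p where "p = lam *\<^sub>R u - s u"
  have pV: "p \<in> V" unfolding p_def using uV inv V
    by (meson image_subset_iff subspace_diff subspace_scale)
  define c where "c = p \<bullet> s p - lam * (p \<bullet> p)"
  have key: "- 2 * t * (p \<bullet> p) + t^2 * c \<le> 0" for t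
  proof -
    have "u + t *\<^sub>R p \<in> V" using uV pV V by (simp add: subspace_add subspace_scale)
    from max[OF this] have "(u + t *\<^sub>R p) \<bullet> s (u + t *\<^sub>R p) \<le> lam * ((u + t *\<^sub>R p) \<bullet> (u + t *\<^sub>R p))" .
    moreover have "s (u + t *\<^sub>R p) = s u + t *\<^sub>R s p" using lin by (simp add: linear_add linear_scale)
    moreover have "u \<bullet> s p = p \<bullet> s u" using sym[of p u] by (simp add: inner_commute)
    moreover have "p \<bullet> s u = lam * (p \<bullet> u) - p \<bullet> p"
      unfolding p_def by (simp add: inner_diff_left inner_diff_right inner_commute algebra_simps)
    ultimately show ?thesis using ueq unfolding c_def
      by (simp add: inner_add_left inner_add_right algebra_simps power2_eq_square inner_commute)
  qed
  show ?thesis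
  proof (rule ccontr)
    assume "s u \<noteq> lam *\<^sub>R u"
    then have "p \<noteq> 0" unfolding p_def by simp
    then have pp: "p \<bullet> p > 0" by simp
    define e where "e = (p \<bullet> p) / (\<bar>c\<bar> + 1)"
    have e: "e > 0" unfolding e_def using pp by simp
    have "e * \<bar>c\<bar> < p \<bullet> p"
    proof -
      have "e * \<bar>c\<bar> = (p \<bullet> p) * (\<bar>c\<bar> / (\<bar>c\<bar> + 1))" unfolding e_def by simp
      also have "\<dots> < (p \<bullet> p) * 1" using pp by (intro mult_strict_left_mono) auto
      finally show ?thesis by simp
    qed
    then have h1: "e * (e * \<bar>c\<bar>) < e * (p \<bullet> p)" using e by (rule mult_strict_left_mono)
    have h2: "- (e * (e * \<bar>c\<bar>)) \<le> e^2 * c"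
    proof -
      have "e * (e * (- \<bar>c\<bar>)) \<le> e * (e * c)" using e
        by (intro mult_left_mono) auto
      then show ?thesis by (simp add: power2_eq_square)
    qed
    have "2 * (e * (p \<bullet> p)) + e^2 * c > 0"
      using h1 h2 mult_pos_pos[OF e pp] by linarith
    then have "2 * e * (p \<bullet> p) + e^2 * c > 0" by (simp add: algebra_simps)
    with key[of "-e"] show False by simp
  qed
qed

lemma eigen_basis_subspace:
  fixes s :: "'a::euclidean_space \<Rightarrow> 'a"
  assumes lin: "linear s" and sym: "\<And>x y. s x \<bullet> y = x \<bullet> s y"
  shows "subspace V \<Longrightarrow> s ` V \<subseteq> V \<Longrightarrow> \<exists>B. B \<subseteq> V \<and> finite B \<and> pairwise orthogonal B \<and>
     (\<forall>b\<in>B. norm b = 1) \<and> span B = V \<and> (\<forall>b\<in>B. s b = (b \<bullet> s b) *\<^sub>R b)"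
proof (induction "dim V" arbitrary: V rule: less_induct)
  case less
  note V = less.prems(1) and inv = less.prems(2)
  show ?case
  proof (cases "V = {0}")
    case True
    then show ?thesis by (intro exI[of _ "{}"]) auto
  next
    case False
    then obtain v where v: "v \<in> V" "v \<noteq> 0" using V subspace_0 by blast
    define K where "K = sphere (0::'a) 1 \<inter> V"
    have cK: "compact K" unfolding K_def
      by (intro compact_Int_closed closed_subspace V) simp
    have "v /\<^sub>R norm v \<in> K" unfolding K_def using v V
      by (simp add: subspace_scale)
    then have neK: "K \<noteq> {}" by blast
    have "continuous_on K (\<lambda>x. x \<bullet> s x)"
      using lin by (intro continuous_intros linear_continuous_on linear_conv_bounded_linear[THEN iffD1])
    from continuous_attains_sup[OF cK neK this]
    obtain u where uK: "u \<in> K" and umax: "\<And>y. y \<in> K \<Longrightarrow> y \<bullet> s y \<le> u \<bullet> s u" by blast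
    define lam where "lam = u \<bullet> s u"
    have uV: "u \<in> V" and u1: "norm u = 1" using uK unfolding K_def by auto
    have uu: "u \<bullet> u = 1" using u1 by (simp add: norm_eq_1)
    have maxV: "x \<bullet> s x \<le> lam * (x \<bullet> x)" if xV: "x \<in> V" for x
    proof (cases "x = 0")
      case True then show ?thesis using lin by (simp add: linear_0)
    next
      case False
      let ?y = "x /\<^sub>R norm x"
      have "?y \<in> K" unfolding K_def using False xV V by (simp add: subspace_scale)
      then have "?y \<bullet> s ?y \<le> lam" using umax unfolding lam_def by blast
      moreover have "?y \<bullet> s ?y = (x \<bullet> s x) / (norm x)^2"
        using lin by (simp add: linear_scale power2_eq_square field_simps)
      ultimately have "(x \<bullet> s x) / (norm x)^2 \<le> lam" by simp
      moreover have "(norm x)^2 > 0" using False by simp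
      ultimately have "x \<bullet> s x \<le> lam * (norm x)^2" by (simp add: divide_le_eq)
      then show ?thesis by (simp add: power2_norm_eq_inner)
    qed
    have ueq: "u \<bullet> s u = lam * (u \<bullet> u)" unfolding uu lam_def by simp
    have su: "s u = lam *\<^sub>R u"
      by (rule max_eigen[OF lin sym V inv uV maxV ueq])
    define W where "W = V \<inter> {y. orthogonal u y}"
    have W: "subspace W" unfolding W_def
      by (rule subspace_inter[OF V subspace_orthogonal_to_vector])
    have invW: "s ` W \<subseteq> W"
    proof
      fix z assume "z \<in> s ` W"
      then obtain x where x: "x \<in> W" "z = s x" by blast
      have "s x \<in> V" using x inv unfolding W_def by blast
      moreover have "u \<bullet> s x = 0"
        using x sym[of u x] su unfolding W_def orthogonal_def by simp
      ultimately show "z \<in> W" using x unfolding W_def orthogonal_def by simp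
    qed
    have "u \<notin> W" using uu unfolding W_def orthogonal_def by auto
    then have "W \<subset> V" using uV unfolding W_def by blast
    moreover have "span W = W" "span V = V" using W V by (simp_all add: span_eq_iff)
    ultimately have "span W \<subset> span V" by metis
    then have "dim W < dim V" by (rule dim_psubset)
    from less.hyps[OF this W invW]
    obtain BW where BW: "BW \<subseteq> W" "finite BW" "pairwise orthogonal BW" "\<forall>b\<in>BW. norm b = 1"
      "span BW = W" "\<forall>b\<in>BW. s b = (b \<bullet> s b) *\<^sub>R b" by blast
    have orthu: "orthogonal u b" "orthogonal b u" if "b \<in> BW" for b
      using that BW(1) unfolding W_def by (auto simp: orthogonal_commute)
    show ?thesis
    proof (intro exI[of _ "insert u BW"] conjI)
      show "insert u BW \<subseteq> V" using BW(1) uV unfolding W_def by auto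
      show "finite (insert u BW)" using BW by simp
      show "pairwise orthogonal (insert u BW)"
        using BW(3) orthu by (auto simp: pairwise_insert)
      show "\<forall>b\<in>insert u BW. norm b = 1" using BW u1 by auto
      show "\<forall>b\<in>insert u BW. s b = (b \<bullet> s b) *\<^sub>R b" using BW su uu by (auto simp: lam_def)
      show "span (insert u BW) = V"
      proof
        show "span (insert u BW) \<subseteq> V"
          using BW(1) uV V unfolding W_def by (intro span_minimal) auto
        show "V \<subseteq> span (insert u BW)"
        proof
          fix x assume xV: "x \<in> V"
          have "x - (u \<bullet> x) *\<^sub>R u \<in> W"
            unfolding W_def orthogonal_def using xV uV V uu
            by (simp add: subspace_diff subspace_scale inner_diff_right)
          then have "x - (u \<bullet> x) *\<^sub>R u \<in> span (insert u BW)"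
            using BW(5) span_mono[of BW "insert u BW"] by auto
          moreover have "(u \<bullet> x) *\<^sub>R u \<in> span (insert u BW)"
            by (intro span_mul span_base) simp
          ultimately have "(x - (u \<bullet> x) *\<^sub>R u) + (u \<bullet> x) *\<^sub>R u \<in> span (insert u BW)"
            by (rule span_add)
          then show "x \<in> span (insert u BW)" by simp
        qed
      qed
    qed
  qed
qed

lemma psd_root_linear:
  fixes s :: "'a::euclidean_space \<Rightarrow> 'a"
  assumes lin: "linear s" and sym: "\<And>x y. s x \<bullet> y = x \<bullet> s y" and pos: "\<And>x. 0 \<le> x \<bullet> s x"
  shows "\<exists>r. linear r \<and> (\<forall>x y. r x \<bullet> y = x \<bullet> r y) \<and> (\<forall>x. r (r x) = s x)"
proof -
  obtain B where B: "finite B" "pairwise orthogonal B" "\<forall>b\<in>B. norm b = 1" "span B = UNIV"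
    "\<forall>b\<in>B. s b = (b \<bullet> s b) *\<^sub>R b"
    using eigen_basis_subspace[OF lin sym, of UNIV] by auto
  define r where "r x = (\<Sum>b\<in>B. (sqrt (b \<bullet> s b) * (b \<bullet> x)) *\<^sub>R b)" for x
  have lr: "linear r"
  proof (rule linearI)
    fix x y show "r (x + y) = r x + r y"
      unfolding r_def by (simp add: inner_add_right distrib_left scaleR_add_left sum.distrib)
  next
    fix c :: real and x show "r (c *\<^sub>R x) = c *\<^sub>R r x"
      unfolding r_def by (simp add: scaleR_sum_right mult.left_commute)
  qed
  have symr: "r x \<bullet> y = x \<bullet> r y" for x y
    unfolding r_def by (simp add: inner_sum_left inner_sum_right inner_commute mult.commute mult.left_commute)
  have dot: "b \<bullet> b' = (if b = b' then 1 else 0)" if "b \<in> B" "b' \<in> B" for b b'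
    using that B(2,3) unfolding pairwise_def orthogonal_def by (auto simp: norm_eq_1)
  have rb: "r b' = sqrt (b' \<bullet> s b') *\<^sub>R b'" if "b' \<in> B" for b'
  proof -
    have "r b' = (\<Sum>b\<in>B. (if b = b' then sqrt (b \<bullet> s b) *\<^sub>R b else 0))"
      unfolding r_def by (intro sum.cong refl) (simp add: dot that)
    also have "\<dots> = sqrt (b' \<bullet> s b') *\<^sub>R b'" using that B(1) by (simp add: sum.delta')
    finally show ?thesis .
  qed
  have "r (r x) = s x" for x
  proof (rule linear_eq_on_span[of "\<lambda>x. r (r x)" s B])
    show "linear (\<lambda>x. r (r x))" using lr linear_compose[OF lr lr] by (simp add: o_def)
    show "linear s" by fact
    show "x \<in> span B" using B(4) by simp
    fix b assume b: "b \<in> B"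
    have "r (r b) = sqrt (b \<bullet> s b) *\<^sub>R r b" using rb[OF b] lr by (simp add: linear_scale)
    also have "\<dots> = (sqrt (b \<bullet> s b) * sqrt (b \<bullet> s b)) *\<^sub>R b" using rb[OF b] by simp
    also have "\<dots> = (b \<bullet> s b) *\<^sub>R b" using pos[of b] by simp
    also have "\<dots> = s b" using B(5) b by simp
    finally show "r (r b) = s b" .
  qed
  then show ?thesis using lr symr by blast
qed

lemma matrix_adj: "(A *v x) \<bullet> y = x \<bullet> (transpose A *v y)"
  for A :: "real^'n^'m"
  by (metis adjoint_matrix adjoint_works matrix_vector_mul_linear)

lemma psd_has_root:
  fixes S :: "real^'n^'n"
  assumes "psd S"
  shows "\<exists>A::real^'n^'n. A ** transpose A = S"
proof -
  have tS: "transpose S = S" and pos: "\<And>v. 0 \<le> v \<bullet> (S *v v)" using assms unfolding psd_def by auto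
  have sym: "(S *v x) \<bullet> y = x \<bullet> (S *v y)" for x y using matrix_adj[of S x y] tS by simp
  obtain r where r: "linear r" "\<And>x y. r x \<bullet> y = x \<bullet> r y" "\<And>x. r (r x) = S *v x"
    using psd_root_linear[of "\<lambda>x. S *v x", OF matrix_vector_mul_linear sym pos] by blast
  define A where "A = matrix r"
  have Ar: "A *v x = r x" for x unfolding A_def using r(1) by (simp add: matrix_works)
  have "(*v) A = r" using Ar by auto
  then have "adjoint ((*v) A) = r" using r(2) by (simp add: adjoint_unique)
  then have tAr: "transpose A *v x = r x" for x by (metis adjoint_matrix)
  have "(A ** transpose A) *v x = S *v x" for x
    by (metis matrix_vector_mul_assoc Ar tAr r(3))
  then have "A ** transpose A = S" by (simp add: matrix_eq)
  then show ?thesis by blast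
qed

lemma orth_exists:
  fixes h k :: "'c::euclidean_space \<Rightarrow> 'a::euclidean_space"
  assumes lh: "linear h" and lk: "linear k" and nrm: "\<And>y. norm (h y) = norm (k y)"
  shows "\<exists>Q. orthogonal_transformation Q \<and> (\<forall>y. Q (h y) = k y)"
proof -
  have hk: "h y \<bullet> h y' = k y \<bullet> k y'" for y y'
  proof -
    have "h y \<bullet> h y' = ((norm (h y + h y'))\<^sup>2 - (norm (h y))\<^sup>2 - (norm (h y'))\<^sup>2) / 2" by (rule dot_norm)
    also have "h y + h y' = h (y + y')" using lh by (simp add: linear_add)
    also have "k (y + y') = k y + k y'" using lk by (simp add: linear_add)
    then have "((norm (h (y + y')))\<^sup>2 - (norm (h y))\<^sup>2 - (norm (h y'))\<^sup>2) / 2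
       = ((norm (k y + k y'))\<^sup>2 - (norm (k y))\<^sup>2 - (norm (k y'))\<^sup>2) / 2" by (simp add: nrm)
    also have "\<dots> = k y \<bullet> k y'" by (rule dot_norm[symmetric])
    finally show ?thesis .
  qed
  define R where "R = range h"
  have sR: "subspace R" unfolding R_def by (metis span_linear_image[OF lh] span_UNIV subspace_span)
  obtain T1 where T1: "T1 \<subseteq> R" "pairwise orthogonal T1" "\<And>x. x \<in> T1 \<Longrightarrow> norm x = 1"
      "independent T1" "card T1 = dim R" "span T1 = R"
    using orthonormal_basis_subspace[OF sR] by blast
  have fT1: "finite T1" using T1(4) by (rule independent_imp_finite)
  define pre where "pre b = (SOME y. h y = b)" for b
  have hpre: "h (pre b) = b" if "b \<in> T1" for b
    using that T1(1) unfolding R_def pre_def by (metis (mono_tags) imageE someI_ex subsetD)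
  define beta where "beta b = k (pre b)" for b
  have bi: "beta b \<bullet> beta b' = b \<bullet> b'" if "b \<in> T1" "b' \<in> T1" for b b'
    unfolding beta_def using hk[of "pre b" "pre b'"] hpre that by simp
  have dot1: "b \<bullet> b' = (if b = b' then 1 else 0)" if "b \<in> T1" "b' \<in> T1" for b b'
    using that T1(2,3) unfolding pairwise_def orthogonal_def by (auto simp: norm_eq_1)
  have injb: "inj_on beta T1"
  proof (rule inj_onI)
    fix b b' assume b: "b \<in> T1" "b' \<in> T1" "beta b = beta b'"
    then have "b \<bullet> b' = beta b \<bullet> beta b" using bi[of b b'] by simp
    also have "\<dots> = 1" using bi[of b b] dot1[of b b] b by simp
    finally show "b = b'" using dot1[OF b(1,2)] by (auto split: if_splits)
  qed
  define T2 where "T2 = beta ` T1"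
  have cT2: "card T2 = card T1" unfolding T2_def using injb by (simp add: card_image)
  have fT2: "finite T2" unfolding T2_def using fT1 by simp
  have oT2: "pairwise orthogonal T2" and nT2: "\<And>x. x \<in> T2 \<Longrightarrow> norm x = 1"
  proof -
    show "pairwise orthogonal T2" unfolding T2_def pairwise_def orthogonal_def
      using bi dot1 injb by (auto simp: inj_on_def)
    show "\<And>x. x \<in> T2 \<Longrightarrow> norm x = 1" unfolding T2_def
      using bi dot1 by (auto simp: norm_eq_1)
  qed
  have iT2: "independent T2" using oT2 nT2 by (intro pairwise_orthogonal_independent) force+
  define W1 where "W1 = {y. \<forall>x\<in>T1. orthogonal x y}"
  define W2 where "W2 = {y. \<forall>x\<in>T2. orthogonal x y}"
  have sW1: "subspace W1" and sW2: "subspace W2" unfolding W1_def W2_def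
    by (rule subspace_orthogonal_to_vectors)+
  have dimW: "dim W + card T = DIM('a)" if "W = {y. \<forall>x\<in>T. orthogonal x y}" "independent T" for W and T :: "'a set"
  proof -
    have "dim {y \<in> UNIV. \<forall>x\<in>span T. orthogonal x y} + dim (span T) = dim (UNIV :: 'a set)"
      by (rule dim_subspace_orthogonal_to_vectors) auto
    moreover have "{y \<in> UNIV. \<forall>x\<in>span T. orthogonal x y} = W"
    proof -
      have "(\<forall>x\<in>span T. orthogonal x y) \<longleftrightarrow> (\<forall>x\<in>T. orthogonal x y)" for y
      proof
        assume "\<forall>x\<in>span T. orthogonal x y" then show "\<forall>x\<in>T. orthogonal x y"
          using span_base by blast
      next
        assume a: "\<forall>x\<in>T. orthogonal x y"
        show "\<forall>x\<in>span T. orthogonal x y"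
        proof
          fix x assume "x \<in> span T"
          then have "orthogonal y x" by (rule orthogonal_to_span) (use a orthogonal_commute in blast)
          then show "orthogonal x y" by (simp add: orthogonal_commute)
        qed
      qed
      then show ?thesis unfolding that(1) by simp
    qed
    moreover have "dim (span T) = card T" using that(2) by (simp add: dim_span indep_card_eq_dim_span)
    ultimately show ?thesis by simp
  qed
  have "dim W1 = dim W2"
    using dimW[OF W1_def T1(4)] dimW[OF W2_def iT2] cT2 by simp
  obtain D1 where D1: "D1 \<subseteq> W1" "pairwise orthogonal D1" "\<And>x. x \<in> D1 \<Longrightarrow> norm x = 1"
      "independent D1" "card D1 = dim W1" "span D1 = W1"
    using orthonormal_basis_subspace[OF sW1] by blast
  obtain D2 where D2: "D2 \<subseteq> W2" "pairwise orthogonal D2" "\<And>x. x \<in> D2 \<Longrightarrow> norm x = 1"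
      "independent D2" "card D2 = dim W2" "span D2 = W2"
    using orthonormal_basis_subspace[OF sW2] by blast
  have fD1: "finite D1" "finite D2" using D1(4) D2(4) by (auto intro: independent_imp_finite)
  obtain delta where delta: "bij_betw delta D1 D2"
    using finite_same_card_bij[OF fD1] D1(5) D2(5) \<open>dim W1 = dim W2\<close> by auto
  have disj: "T1 \<inter> D1 = {}"
  proof (rule ccontr)
    assume "T1 \<inter> D1 \<noteq> {}"
    then obtain x where "x \<in> T1" "x \<in> D1" by blast
    then have "orthogonal x x" "norm x = 1" using D1(1) T1(3) unfolding W1_def by auto
    then show False by (simp add: orthogonal_self)
  qed
  define B1 where "B1 = T1 \<union> D1"
  define F where "F x = (if x \<in> T1 then beta x else delta x)" for x
  have cross: "orthogonal a d \<and> orthogonal d a" if "a \<in> T1" "d \<in> D1" for a d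
    using that D1(1) unfolding W1_def by (auto simp: orthogonal_commute)
  have oB1: "pairwise orthogonal B1"
    unfolding B1_def pairwise_def using T1(2) D1(2) cross unfolding pairwise_def
    by blast
  have iB1: "independent B1"
    using oB1 T1(3) D1(3) unfolding B1_def by (intro pairwise_orthogonal_independent) force+
  obtain Q where lQ: "linear Q" and QF: "\<forall>x\<in>B1. Q x = F x"
    using linear_independent_extend[OF iB1] by blast
  have spanB1: "span B1 = UNIV"
  proof -
    have "x \<in> span B1" for x
    proof -
      obtain y z where yz: "y \<in> span T1" "\<And>w. w \<in> span T1 \<Longrightarrow> orthogonal z w" "x = y + z"
        using orthogonal_subspace_decomp_exists[where S=T1 and x=x] by blast
      have "z \<in> W1" unfolding W1_def using yz(2) span_base orthogonal_commute by blast
      then have "z \<in> span D1" using D1(6) by simp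
      then show ?thesis unfolding B1_def using yz(1,3)
        by (metis span_add span_mono subsetD sup.cobounded1 sup.cobounded2)
    qed
    then show ?thesis by auto
  qed
  have FF: "F x \<bullet> F x' = x \<bullet> x'" if "x \<in> B1" "x' \<in> B1" for x x'
  proof -
    have TD: "F a \<bullet> F d = 0 \<and> a \<bullet> d = 0" if "a \<in> T1" "d \<in> D1" for a d
    proof -
      have "d \<notin> T1" using disj that by blast
      then have "F d = delta d" "F a = beta a" unfolding F_def using that by auto
      moreover have "delta d \<in> W2" using delta that D2(1) by (auto simp: bij_betw_def)
      moreover have "beta a \<in> T2" unfolding T2_def using that by simp
      ultimately have "F a \<bullet> F d = 0" unfolding W2_def orthogonal_def by simp
      moreover have "a \<bullet> d = 0" using that D1(1) unfolding W1_def orthogonal_def by auto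
      ultimately show ?thesis by simp
    qed
    show ?thesis
    proof (cases "x \<in> T1")
      case xT: True
      show ?thesis
      proof (cases "x' \<in> T1")
        case True then show ?thesis using xT bi unfolding F_def by simp
      next
        case False then have "x' \<in> D1" using that unfolding B1_def by simp
        then show ?thesis using TD[OF xT] by simp
      qed
    next
      case xD: False
      then have xD1: "x \<in> D1" using that unfolding B1_def by simp
      show ?thesis
      proof (cases "x' \<in> T1")
        case True then show ?thesis using TD[OF True xD1] by (simp add: inner_commute)
      next
        case False then have x'D: "x' \<in> D1" using that unfolding B1_def by simp
        have Fx: "F x = delta x" "F x' = delta x'" unfolding F_def using xD False by auto
        have dD: "delta x \<in> D2" "delta x' \<in> D2" using delta xD1 x'D by (auto simp: bij_betw_def)
        show ?thesis
        proof (cases "x = x'")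
          case True then show ?thesis using Fx dD D2(3) D1(3) xD1 by (simp add: norm_eq_1[symmetric] power2_norm_eq_inner[symmetric])
        next
          case False
          then have "delta x \<noteq> delta x'" using delta xD1 x'D by (auto simp: bij_betw_def inj_on_def)
          then have "delta x \<bullet> delta x' = 0" using D2(2) dD unfolding pairwise_def orthogonal_def by blast
          moreover have "x \<bullet> x' = 0" using D1(2) xD1 x'D False unfolding pairwise_def orthogonal_def by blast
          ultimately show ?thesis using Fx by simp
        qed
      qed
    qed
  qed
  have oQ: "orthogonal_transformation Q"
    unfolding orthogonal_transformation_def
  proof (intro conjI lQ allI)
    fix v w
    have bl1: "bilinear (\<lambda>x y. Q x \<bullet> Q y)"
      using lQ unfolding bilinear_def by (auto intro!: linearI simp: linear_add linear_scale inner_add_left inner_add_right)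
    have bl2: "bilinear (\<lambda>x y. x \<bullet> (y::'a))"
      unfolding bilinear_def by (auto intro!: linearI simp: inner_add_left inner_add_right)
    show "Q v \<bullet> Q w = v \<bullet> w"
      by (rule bilinear_eq[OF bl1 bl2, of UNIV B1 UNIV B1]) (auto simp: spanB1 QF FF)
  qed
  have "Q (h y) = k y" for y
  proof -
    define P where "P = pre ` T1"
    have "h ` P = T1" unfolding P_def using hpre by (auto simp: image_image)
    then have "h y \<in> span (h ` P)" using T1(6) unfolding R_def by simp
    then obtain y' where y': "y' \<in> span P" "h y = h y'" using span_linear_image[OF lh, of P] by auto
    have "norm (k (y - y')) = norm (h (y - y'))" by (simp add: nrm)
    also have "h (y - y') = 0" using y' lh by (simp add: linear_diff)
    finally have ky: "k y = k y'" using lk by (simp add: linear_diff)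
    have "Q (h y') = k y'"
    proof (rule linear_eq_on_span[of "\<lambda>x. Q (h x)" k P])
      show "linear (\<lambda>x. Q (h x))" using linear_compose[OF lh lQ] by (simp add: o_def)
      show "linear k" by fact
      show "y' \<in> span P" by fact
      fix x assume "x \<in> P"
      then obtain b where b: "b \<in> T1" "x = pre b" unfolding P_def by blast
      then show "Q (h x) = k x" using QF hpre[OF b(1)] unfolding B1_def F_def beta_def by auto
    qed
    then show ?thesis using y' ky by simp
  qed
  then show ?thesis using oQ by blast
qed


lemma linear_borel_measurable[measurable]:
  fixes f :: "'a::euclidean_space \<Rightarrow> 'b::euclidean_space"
  assumes "linear f" shows "f \<in> borel_measurable borel"
  by (intro borel_measurable_continuous_onI linear_continuous_on linear_conv_bounded_linear[THEN iffD1] assms)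

typedef (overloaded) ('a::euclidean_space) eidx = "{..<DIM('a)}"
  by (rule exI[of _ 0]) simp

instance eidx :: (euclidean_space) finite
proof
  show "finite (UNIV :: 'a eidx set)"
    by (metis finite_imageI finite_lessThan type_definition.univ type_definition_eidx)
qed

instantiation eidx :: (euclidean_space) linorder
begin
definition less_eq_eidx :: "'a eidx \<Rightarrow> 'a eidx \<Rightarrow> bool" where "less_eq_eidx x y \<longleftrightarrow> Rep_eidx x \<le> Rep_eidx y"
definition less_eidx :: "'a eidx \<Rightarrow> 'a eidx \<Rightarrow> bool" where "less_eidx x y \<longleftrightarrow> Rep_eidx x < Rep_eidx y"
instance by standard (auto simp: less_eq_eidx_def less_eidx_def Rep_eidx_inject)
end

instance eidx :: (euclidean_space) wellorder
proof
  fix P :: "'a eidx \<Rightarrow> bool" and a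
  assume H: "\<And>x. (\<And>y. y < x \<Longrightarrow> P y) \<Longrightarrow> P x"
  have "\<forall>x::'a eidx. Rep_eidx x = n \<longrightarrow> P x" for n
  proof (induction n rule: less_induct)
    case (less n)
    show ?case
    proof (intro allI impI)
      fix x :: "'a eidx" assume "Rep_eidx x = n"
      then show "P x" using less H unfolding less_eidx_def by auto
    qed
  qed
  then show "P a" by blast
qed

lemma card_eidx: "CARD('a::euclidean_space eidx) = DIM('a)"
proof -
  have "(UNIV :: 'a eidx set) = Abs_eidx ` {..<DIM('a)}" by (metis type_definition.univ type_definition_eidx)
  moreover have "inj_on (Abs_eidx :: nat \<Rightarrow> 'a eidx) {..<DIM('a)}" by (metis Abs_eidx_inject inj_onI)
  ultimately show ?thesis by (metis card_image card_lessThan)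
qed

lemma emeasure_lebesgue_borel: "S \<in> sets borel \<Longrightarrow> emeasure lebesgue S = emeasure lborel S"
  by (simp add: emeasure_completion)

lemma lborel_orth_vec:
  fixes Q :: "real^'k::{finite,wellorder} \<Rightarrow> real^'k::_"
  assumes Q: "orthogonal_transformation Q"
  shows "distr lborel borel Q = lborel"
proof -
  have lQ: "linear Q" using Q by (rule orthogonal_transformation_linear)
  have bQ: "bij Q" using Q by (rule orthogonal_transformation_bij)
  have iQ: "orthogonal_transformation (inv Q)" using Q by (rule orthogonal_transformation_inv)
  have "lborel = distr lborel borel Q"
  proof (rule lborel_eqI)
    fix l u :: "real^'k::_" assume le: "\<And>b. b \<in> Basis \<Longrightarrow> l \<bullet> b \<le> u \<bullet> b"
    have mQ: "Q \<in> borel_measurable borel" using lQ by (rule linear_borel_measurable)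
    have S: "Q -` box l u \<in> sets borel" using mQ by (simp add: measurable_sets_borel)
    have eq: "Q -` box l u = inv Q ` box l u" using bQ by (rule bij_vimage_eq_inv_image)
    have lm: "Q -` box l u \<in> lmeasurable" unfolding eq by (rule measurable_orthogonal_image[OF iQ lmeasurable_box])
    have "emeasure (distr lborel borel Q) (box l u) = emeasure lborel (Q -` box l u)"
      using mQ by (simp add: emeasure_distr)
    also have "\<dots> = emeasure lebesgue (Q -` box l u)" using S by (simp add: emeasure_lebesgue_borel)
    also have "\<dots> = ennreal (measure lebesgue (Q -` box l u))"
      using lm by (intro emeasure_eq_ennreal_measure fmeasurableD2)
    also have "measure lebesgue (Q -` box l u) = measure lebesgue (box l u)"
      unfolding eq by (rule measure_orthogonal_image[OF iQ lmeasurable_box])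
    also have "ennreal (measure lebesgue (box l u)) = emeasure lebesgue (box l u)"
      using lmeasurable_box by (intro emeasure_eq_ennreal_measure[symmetric] fmeasurableD2)
    also have "\<dots> = emeasure lborel (box l u)" by (simp add: emeasure_lebesgue_borel)
    also have "\<dots> = (\<Prod>b\<in>Basis. (u - l) \<bullet> b)"
      using le by (simp add: emeasure_lborel_box_eq prod_nonneg inner_diff_left)
    finally show "emeasure (distr lborel borel Q) (box l u) = (\<Prod>b\<in>Basis. (u - l) \<bullet> b)" .
  qed simp
  then show ?thesis by simp
qed


definition basis_map :: "('a::euclidean_space \<Rightarrow> 'c::euclidean_space) \<Rightarrow> 'a \<Rightarrow> 'c" where
  "basis_map h x = (\<Sum>b\<in>Basis. (x \<bullet> b) *\<^sub>R h b)"

lemma basis_map_linear: "linear (basis_map h)"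
  unfolding basis_map_def
  by (rule linearI) (simp_all add: inner_add_left scaleR_add_left sum.distrib scaleR_sum_right)

lemma basis_map_inner_h:
  fixes h :: "'a::euclidean_space \<Rightarrow> 'c::euclidean_space"
  assumes h: "bij_betw h Basis Basis" and b: "b \<in> Basis"
  shows "basis_map h x \<bullet> h b = x \<bullet> b"
proof -
  have "basis_map h x \<bullet> h b = (\<Sum>b'\<in>(Basis::'a set). (x \<bullet> b') * (h b' \<bullet> h b))"
    unfolding basis_map_def by (simp add: inner_sum_left)
  also have "\<dots> = (\<Sum>b'\<in>(Basis::'a set). if b' = b then x \<bullet> b else 0)"
  proof (intro sum.cong refl)
    fix b' :: 'a assume b': "b' \<in> Basis"
    have "h b' \<in> Basis" "h b \<in> Basis" using h b b' by (auto simp: bij_betw_def)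
    moreover have "h b' = h b \<longleftrightarrow> b' = b" using h b b' by (auto simp: bij_betw_def inj_on_def)
    ultimately show "(x \<bullet> b') * (h b' \<bullet> h b) = (if b' = b then x \<bullet> b else 0)"
      by (auto simp: inner_Basis)
  qed
  also have "\<dots> = x \<bullet> b" using b by simp
  finally show ?thesis .
qed

lemma basis_map_inner:
  fixes h :: "'a::euclidean_space \<Rightarrow> 'c::euclidean_space"
  assumes h: "bij_betw h Basis Basis"
  shows "basis_map h x \<bullet> basis_map h y = x \<bullet> y"
proof -
  have "basis_map h x \<bullet> basis_map h y = (\<Sum>c\<in>Basis. (basis_map h x \<bullet> c) * (basis_map h y \<bullet> c))"
    by (rule euclidean_inner)
  also have "\<dots> = (\<Sum>b\<in>Basis. (basis_map h x \<bullet> h b) * (basis_map h y \<bullet> h b))"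
    using h by (rule sum.reindex_bij_betw[symmetric])
  also have "\<dots> = (\<Sum>b\<in>Basis. (x \<bullet> b) * (y \<bullet> b))"
    by (intro sum.cong refl) (simp add: basis_map_inner_h[OF h])
  also have "\<dots> = x \<bullet> y" by (rule euclidean_inner[symmetric])
  finally show ?thesis .
qed

lemma basis_map_inv:
  fixes h :: "'a::euclidean_space \<Rightarrow> 'c::euclidean_space"
  assumes h: "bij_betw h Basis Basis" and h': "bij_betw h' Basis Basis"
    and hh: "\<And>b. b \<in> Basis \<Longrightarrow> h' (h b) = b"
  shows "basis_map h' (basis_map h x) = x"
proof (rule euclidean_eqI)
  fix b :: 'a assume b: "b \<in> Basis"
  have hb: "h b \<in> Basis" using h b by (auto simp: bij_betw_def)
  have "basis_map h' (basis_map h x) \<bullet> b = basis_map h' (basis_map h x) \<bullet> h' (h b)" using hh[OF b] by simp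
  also have "\<dots> = basis_map h x \<bullet> h b" by (rule basis_map_inner_h[OF h' hb])
  also have "\<dots> = x \<bullet> b" by (rule basis_map_inner_h[OF h b])
  finally show "basis_map h' (basis_map h x) \<bullet> b = x \<bullet> b" .
qed

lemma basis_map_lborel:
  fixes h :: "'a::euclidean_space \<Rightarrow> 'c::euclidean_space"
  assumes h: "bij_betw h Basis Basis"
  shows "distr lborel borel (basis_map h) = lborel"
proof -
  have m: "basis_map h \<in> borel_measurable borel" by (intro linear_borel_measurable basis_map_linear)
  have "lborel = distr lborel borel (basis_map h)"
  proof (rule lborel_eqI)
    fix l u :: 'c assume le: "\<And>b. b \<in> Basis \<Longrightarrow> l \<bullet> b \<le> u \<bullet> b"
    define l' where "l' = (\<Sum>b\<in>Basis. (l \<bullet> h b) *\<^sub>R b)"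
    define u' where "u' = (\<Sum>b\<in>Basis. (u \<bullet> h b) *\<^sub>R b)"
    have l'b: "l' \<bullet> b = l \<bullet> h b" and u'b: "u' \<bullet> b = u \<bullet> h b" if "b \<in> Basis" for b :: 'a
      unfolding l'_def u'_def using that by (simp_all add: inner_sum_left inner_Basis if_distrib cong: if_cong)
    have pre: "basis_map h -` box l u = box l' u'"
    proof -
      have "x \<in> box l u \<longleftrightarrow> (\<forall>b\<in>Basis. l \<bullet> h b < x \<bullet> h b \<and> x \<bullet> h b < u \<bullet> h b)" for x
      proof -
        have "x \<in> box l u \<longleftrightarrow> (\<forall>c\<in>Basis. l \<bullet> c < x \<bullet> c \<and> x \<bullet> c < u \<bullet> c)" by (simp add: mem_box)
        also have "\<dots> \<longleftrightarrow> (\<forall>c\<in>h ` Basis. l \<bullet> c < x \<bullet> c \<and> x \<bullet> c < u \<bullet> c)"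
          using h by (simp add: bij_betw_def)
        finally show ?thesis by simp
      qed
      then show ?thesis
        by (auto simp: mem_box basis_map_inner_h[OF h] l'b u'b)
    qed
    have le': "l \<bullet> h b \<le> u \<bullet> h b" if "b \<in> Basis" for b
      using le h that by (auto simp: bij_betw_def)
    have "emeasure (distr lborel borel (basis_map h)) (box l u) = emeasure lborel (box l' u')"
      using m by (simp add: emeasure_distr pre)
    also have "\<dots> = (\<Prod>b\<in>Basis. (u' - l') \<bullet> b)"
      using le' by (simp add: emeasure_lborel_box_eq inner_diff_left l'b u'b prod_nonneg)
    also have "\<dots> = (\<Prod>b\<in>Basis. (u - l) \<bullet> h b)"
      by (auto intro!: arg_cong[where f=ennreal] prod.cong simp: inner_diff_left l'b u'b)
    also have "\<dots> = (\<Prod>c\<in>Basis. (u - l) \<bullet> c)"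
      using prod.reindex_bij_betw[OF h, of "\<lambda>c. (u - l) \<bullet> c"] by simp
    finally show "emeasure (distr lborel borel (basis_map h)) (box l u) = (\<Prod>c\<in>Basis. (u - l) \<bullet> c)"
      by simp
  qed simp
  then show ?thesis by simp
qed

lemma lborel_orth:
  fixes Q :: "'a::euclidean_space \<Rightarrow> 'a"
  assumes Q: "orthogonal_transformation Q"
  shows "distr lborel borel Q = lborel"
proof -
  have "card (Basis :: (real^('a eidx)) set) = card (Basis :: 'a set)"
    by (simp add: card_eidx)
  then obtain h :: "'a \<Rightarrow> real^('a eidx)" where h: "bij_betw h Basis Basis"
    using finite_same_card_bij[of "Basis :: 'a set" "Basis :: (real^('a eidx)) set"] by auto
  define h' where "h' = inv_into Basis h"
  have h': "bij_betw h' Basis Basis" unfolding h'_def using h by (rule bij_betw_inv_into)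
  have hh: "h' (h b) = b" if "b \<in> Basis" for b
    unfolding h'_def using h that by (simp add: bij_betw_def)
  have hh': "h (h' c) = c" if "c \<in> Basis" for c
    unfolding h'_def using h that by (simp add: bij_betw_def f_inv_into_f)
  define \<iota> where "\<iota> = basis_map h"
  define \<kappa> where "\<kappa> = basis_map h'"
  have ki: "\<kappa> (\<iota> x) = x" for x unfolding \<iota>_def \<kappa>_def by (rule basis_map_inv[OF h h' hh])
  have lQ: "linear Q" using Q by (rule orthogonal_transformation_linear)
  define Q' where "Q' = \<iota> \<circ> Q \<circ> \<kappa>"
  have oQ': "orthogonal_transformation Q'"
    unfolding orthogonal_transformation_def
  proof (intro conjI allI)
    show "linear Q'" unfolding Q'_def \<iota>_def \<kappa>_def
      by (intro linear_compose basis_map_linear lQ)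
    fix v w
    show "Q' v \<bullet> Q' w = v \<bullet> w"
      unfolding Q'_def using Q
      by (simp add: \<iota>_def \<kappa>_def basis_map_inner[OF h] basis_map_inner[OF h'] orthogonal_transformation_def)
  qed
  have mk: "\<kappa> \<in> borel_measurable borel" unfolding \<kappa>_def by (intro linear_borel_measurable basis_map_linear)
  have mQ: "Q \<in> borel_measurable borel" using lQ by (rule linear_borel_measurable)
  have mQ': "Q' \<in> borel_measurable borel" using oQ' by (intro linear_borel_measurable orthogonal_transformation_linear)
  have L: "lborel = distr lborel borel \<kappa>" unfolding \<kappa>_def by (rule basis_map_lborel[OF h', symmetric])
  have "Q \<circ> \<kappa> = \<kappa> \<circ> Q'" unfolding Q'_def by (auto simp: ki)
  have "distr lborel borel Q = distr (distr lborel borel \<kappa>) borel Q" by (subst L) simp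
  also have "\<dots> = distr lborel borel (Q \<circ> \<kappa>)" using mk mQ by (simp add: distr_distr)
  also have "\<dots> = distr lborel borel (\<kappa> \<circ> Q')" by (simp add: \<open>Q \<circ> \<kappa> = \<kappa> \<circ> Q'\<close>)
  also have "\<dots> = distr (distr lborel borel Q') borel \<kappa>" using mk mQ' by (simp add: distr_distr)
  also have "\<dots> = lborel" using L by (simp add: lborel_orth_vec[OF oQ'])
  finally show ?thesis .
qed


definition gdens :: "'a::euclidean_space \<Rightarrow> real" where
  "gdens x = (\<Prod>b\<in>Basis. std_normal_density (x \<bullet> b))"

definition Gauss :: "'a::euclidean_space measure" where
  "Gauss = density lborel (\<lambda>x. ennreal (gdens x))"

lemma gdens_measurable[measurable]: "gdens \<in> borel_measurable borel"
  unfolding gdens_def by measurable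

lemma gdens_nonneg: "0 \<le> gdens x"
  unfolding gdens_def by (intro prod_nonneg) (simp add: normal_density_nonneg)

lemma gdens_eq:
  fixes x :: "'a::euclidean_space"
  shows "gdens x = exp (- (x \<bullet> x) / 2) / sqrt (2 * pi) ^ DIM('a)"
proof -
  have "gdens x = (\<Prod>b\<in>Basis. exp (- ((x \<bullet> b)^2) / 2) / sqrt (2 * pi))"
    unfolding gdens_def std_normal_density_def by simp
  also have "\<dots> = (\<Prod>b\<in>(Basis::'a set). exp (- ((x \<bullet> b)^2) / 2)) / sqrt (2 * pi) ^ DIM('a)"
    by (simp add: prod_dividef)
  also have "(\<Prod>b\<in>(Basis::'a set). exp (- ((x \<bullet> b)^2) / 2)) = exp (\<Sum>b\<in>Basis. - ((x \<bullet> b)^2) / 2)"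
    by (simp add: exp_sum)
  also have "(\<Sum>b\<in>(Basis::'a set). - ((x \<bullet> b)^2) / 2) = - (x \<bullet> x) / 2"
    by (simp add: euclidean_inner[of x x] power2_eq_square sum_divide_distrib sum_negf)
  finally show ?thesis .
qed

lemma sets_Gauss[measurable_cong, simp]: "sets Gauss = sets borel"
  by (simp add: Gauss_def)

lemma space_Gauss[simp]: "space Gauss = UNIV"
  by (simp add: Gauss_def)

lemma Gauss_orth:
  fixes Q :: "'a::euclidean_space \<Rightarrow> 'a"
  assumes Q: "orthogonal_transformation Q"
  shows "distr Gauss borel Q = Gauss"
proof (rule measure_eqI)
  have mQ[measurable]: "Q \<in> borel_measurable borel"
    using Q by (intro linear_borel_measurable orthogonal_transformation_linear)
  show "sets (distr Gauss borel Q) = sets Gauss" by simp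
  fix A :: "'a set" assume "A \<in> sets (distr Gauss borel Q)"
  then have A[measurable]: "A \<in> sets borel" by simp
  have gQ: "gdens (Q x) = gdens x" for x
    using Q by (simp add: gdens_eq orthogonal_transformation_def)
  have mQ': "Q \<in> measurable Gauss borel"
    using mQ measurable_cong_sets[OF sets_Gauss refl] by blast
  have "emeasure (distr Gauss borel Q) A = emeasure Gauss (Q -` A)"
    using emeasure_distr[OF mQ' A] by simp
  also have "\<dots> = (\<integral>\<^sup>+x. ennreal (gdens x) * indicator (Q -` A) x \<partial>lborel)"
  proof -
    have QA: "Q -` A \<in> sets borel" using mQ A by (rule measurable_sets_borel)
    show ?thesis unfolding Gauss_def using QA by (simp add: emeasure_density)
  qed
  also have "\<dots> = (\<integral>\<^sup>+x. ennreal (gdens (Q x)) * indicator A (Q x) \<partial>lborel)"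
    by (simp add: gQ indicator_def)
  also have "\<dots> = (\<integral>\<^sup>+y. ennreal (gdens y) * indicator A y \<partial>distr lborel borel Q)"
    by (simp add: nn_integral_distr)
  also have "\<dots> = (\<integral>\<^sup>+y. ennreal (gdens y) * indicator A y \<partial>lborel)"
    by (simp add: lborel_orth[OF Q])
  also have "\<dots> = emeasure Gauss A"
    unfolding Gauss_def by (simp add: emeasure_density)
  finally show "emeasure (distr Gauss borel Q) A = emeasure Gauss A" .
qed

definition G1 :: "real \<Rightarrow> real \<Rightarrow> ennreal" where
  "G1 a c = (\<integral>\<^sup>+t. ennreal (std_normal_density t) * indicator {a<..<c} t \<partial>lborel)"

lemma Gauss_box:
  "emeasure (Gauss :: 'a::euclidean_space measure) (box l u) = (\<Prod>b\<in>Basis. G1 (l \<bullet> b) (u \<bullet> b))"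
proof -
  have "emeasure (Gauss :: 'a measure) (box l u) = (\<integral>\<^sup>+x. ennreal (gdens x) * indicator (box l u) x \<partial>lborel)"
    unfolding Gauss_def by (simp add: emeasure_density)
  also have "\<dots> = (\<integral>\<^sup>+x. (\<Prod>b\<in>Basis. ennreal (std_normal_density (x \<bullet> b)) * indicator {l \<bullet> b<..<u \<bullet> b} (x \<bullet> b)) \<partial>lborel)"
  proof (intro nn_integral_cong)
    fix x :: 'a
    have "ennreal (gdens x) = (\<Prod>b\<in>Basis. ennreal (std_normal_density (x \<bullet> b)))"
      unfolding gdens_def by (rule prod_ennreal[symmetric]) (simp add: normal_density_nonneg)
    moreover have "indicator (box l u) x = (\<Prod>b\<in>(Basis::'a set). indicator {l \<bullet> b<..<u \<bullet> b} (x \<bullet> b) :: ennreal)"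
    proof (cases "x \<in> box l u")
      case True then show ?thesis by (simp add: mem_box indicator_def)
    next
      case False
      then obtain b :: 'a where b: "b \<in> Basis" "x \<bullet> b \<notin> {l \<bullet> b<..<u \<bullet> b}" by (auto simp: mem_box)
      have "(\<Prod>b\<in>(Basis::'a set). indicator {l \<bullet> b<..<u \<bullet> b} (x \<bullet> b) :: ennreal) = 0"
        using b by (intro prod_zero) (auto intro!: bexI[of _ b] simp: indicator_def)
      then show ?thesis using False by simp
    qed
    ultimately show "ennreal (gdens x) * indicator (box l u) x = (\<Prod>b\<in>Basis. ennreal (std_normal_density (x \<bullet> b)) * indicator {l \<bullet> b<..<u \<bullet> b} (x \<bullet> b))"
      by (simp add: prod.distrib)
  qed
  also have "\<dots> = (\<Prod>b\<in>Basis. G1 (l \<bullet> b) (u \<bullet> b))"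
    unfolding G1_def by (rule nn_integral_lborel_prod) auto
  finally show ?thesis .
qed

lemma prob_space_Gauss: "prob_space (Gauss :: 'a::euclidean_space measure)"
proof
  have eq: "(\<lambda>x. ennreal (gdens x)) = (\<lambda>x::'a. \<Prod>b\<in>Basis. ennreal (std_normal_density (x \<bullet> b)))"
    unfolding gdens_def by (intro ext prod_ennreal[symmetric]) (simp add: normal_density_nonneg)
  have "emeasure (Gauss :: 'a measure) UNIV = (\<integral>\<^sup>+x. ennreal (gdens (x::'a)) \<partial>lborel)"
    unfolding Gauss_def by (simp add: emeasure_density)
  also have "\<dots> = (\<integral>\<^sup>+x. (\<Prod>b\<in>Basis. ennreal (std_normal_density ((x::'a) \<bullet> b))) \<partial>lborel)"
    by (simp only: eq)
  also have "\<dots> = (\<Prod>b\<in>(Basis::'a set). \<integral>\<^sup>+t. ennreal (std_normal_density t) \<partial>lborel)"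
    by (rule nn_integral_lborel_prod) auto
  also have "(\<integral>\<^sup>+t. ennreal (std_normal_density t) \<partial>lborel) = 1"
  proof -
    interpret p: prob_space "density lborel (\<lambda>x. ennreal (normal_density 0 1 x))"
      by (rule prob_space_normal_density) simp
    show ?thesis using p.emeasure_space_1 by (simp add: emeasure_density)
  qed
  finally show "emeasure (Gauss :: 'a measure) (space Gauss) = 1" by simp
qed

lemma measure_eq_boxes:
  fixes M N :: "'a::euclidean_space measure"
  assumes sM: "sets M = sets borel" and sN: "sets N = sets borel" and fM: "finite_measure M"
    and eq: "\<And>l u. emeasure M (box l u) = emeasure N (box l u)"
  shows "M = N"
proof (rule measure_eqI_generator_eq)
  let ?E = "range (\<lambda>(a, b). box a b::'a set)"
  show "Int_stable ?E"
    by (auto simp: Int_stable_def box_Int_box)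
  show "?E \<subseteq> Pow UNIV" "sets M = sigma_sets UNIV ?E" "sets N = sigma_sets UNIV ?E"
    by (simp_all add: borel_eq_box sM sN)
  let ?A = "\<lambda>n::nat. box (- (real n *\<^sub>R One)) (real n *\<^sub>R One) :: 'a set"
  show "range ?A \<subseteq> ?E" "(\<Union>i. ?A i) = UNIV"
    unfolding UN_box_eq_UNIV by auto
  show "emeasure M (?A i) \<noteq> \<infinity>" for i using fM by (simp add: finite_measure.emeasure_finite)
  show "emeasure M X = emeasure N X" if "X \<in> ?E" for X
    using that eq by auto
qed


lemma prob_space_N01: "prob_space (density lborel (\<lambda>x. ennreal (std_normal_density x)))"
  by (rule prob_space_normal_density) simp

lemma emeasure_N01_interval: "emeasure (density lborel (\<lambda>x. ennreal (std_normal_density x))) {a<..<c} = G1 a c"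
  unfolding G1_def by (simp add: emeasure_density)

lemma Basis_vec_axis: "(Basis :: (real^'n) set) = range (\<lambda>i. axis i 1)"
  by (auto simp: Basis_vec_def)

lemma std_gauss_vec_eq: "(std_gauss_vec :: (real^'n) measure) = Gauss"
proof -
  let ?N = "density lborel (\<lambda>x. ennreal (std_normal_density x))"
  let ?P = "PiM (UNIV :: 'n set) (\<lambda>_. ?N)"
  have pN: "prob_space ?N" by (rule prob_space_N01)
  interpret P: product_prob_space "\<lambda>_::'n. ?N" UNIV
    by (intro product_prob_spaceI pN)
  have sP: "sets ?P = sets (PiM (UNIV :: 'n set) (\<lambda>_. borel))"
    by (intro sets_PiM_cong) auto
  have mchi: "(\<lambda>f. \<chi> i. f i) \<in> measurable ?P (borel :: (real^'n) measure)"
  proof -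
    have "(\<lambda>f. \<chi> i. f i) \<in> measurable (PiM (UNIV :: 'n set) (\<lambda>_. borel)) (borel :: (real^'n) measure)"
    proof (rule borel_measurable_euclidean_space[THEN iffD2], intro ballI)
      fix b :: "real^'n" assume "b \<in> Basis"
      then obtain i where b: "b = axis i 1" unfolding Basis_vec_axis by blast
      have "(\<lambda>x. (\<chi> j. x j) \<bullet> b) = (\<lambda>x. x i)" unfolding b by (simp add: inner_axis)
      then show "(\<lambda>x. (\<chi> j. x j) \<bullet> b) \<in> borel_measurable (PiM (UNIV :: 'n set) (\<lambda>_. borel))"
        using measurable_component_singleton[of i UNIV "\<lambda>_. borel"] by simp
    qed
    then show ?thesis using measurable_cong_sets[OF sP refl] by blast
  qed
  have std: "std_gauss_vec = distr ?P borel (\<lambda>f. \<chi> i. f i)"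
    unfolding std_gauss_vec_def by simp
  have pS: "prob_space (std_gauss_vec :: (real^'n) measure)"
    unfolding std by (intro prob_space.prob_space_distr prob_space_PiM pN mchi)
  show ?thesis
  proof (rule measure_eq_boxes)
    show "sets (std_gauss_vec :: (real^'n) measure) = sets borel" unfolding std by simp
    show "sets (Gauss :: (real^'n) measure) = sets borel" by simp
    show "finite_measure (std_gauss_vec :: (real^'n) measure)" using pS by (simp add: prob_space_def)
    fix l u :: "real^'n"
    have pre: "(\<lambda>f. \<chi> i. f i) -` box l u \<inter> space ?P = PiE UNIV (\<lambda>i. {l $ i<..<u $ i})"
    proof -
      have "space ?P = UNIV" by (simp add: space_PiM)
      moreover have "(\<lambda>f. \<chi> i. f i) -` box l u = PiE UNIV (\<lambda>i. {l $ i<..<u $ i})"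
        by (auto simp: mem_box_cart PiE_iff)
      ultimately show ?thesis by simp
    qed
    have "emeasure (std_gauss_vec :: (real^'n) measure) (box l u) = emeasure ?P (PiE UNIV (\<lambda>i. {l $ i<..<u $ i}))"
      unfolding std using mchi by (simp add: emeasure_distr pre)
    also have "\<dots> = (\<Prod>i\<in>UNIV. emeasure ?N {l $ i<..<u $ i})"
      by (rule P.emeasure_PiM) auto
    also have "\<dots> = (\<Prod>i\<in>UNIV. G1 (l $ i) (u $ i))" by (simp add: emeasure_N01_interval)
    also have "\<dots> = (\<Prod>b\<in>(Basis :: (real^'n) set). G1 (l \<bullet> b) (u \<bullet> b))"
    proof -
      have "inj (\<lambda>i::'n. axis i (1::real))" by (auto simp: inj_on_def axis_eq_axis)
      then show ?thesis unfolding Basis_vec_axis by (simp add: prod.reindex inner_axis)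
    qed
    also have "\<dots> = emeasure Gauss (box l u)" by (rule Gauss_box[symmetric])
    finally show "emeasure (std_gauss_vec :: (real^'n) measure) (box l u) = emeasure Gauss (box l u)" .
  qed
qed


lemma measurable_Gauss_borel[simp]: "measurable Gauss M = measurable borel M"
  by (rule measurable_cong_sets) simp_all

lemma box_pair: "box (l1, l2) (u1, u2) = box l1 u1 \<times> box l2 u2"
  by (auto simp: mem_box Basis_prod_def inner_Pair ball_Un)

lemma Gauss_pair: "(Gauss :: ('a::euclidean_space \<times> 'b::euclidean_space) measure) = (Gauss \<Otimes>\<^sub>M Gauss)"
proof (rule measure_eq_boxes)
  show "sets (Gauss :: ('a \<times> 'b) measure) = sets borel" by simp
  have "sets ((Gauss :: 'a measure) \<Otimes>\<^sub>M (Gauss :: 'b measure)) = sets (borel \<Otimes>\<^sub>M borel)"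
    by (intro sets_pair_measure_cong) simp_all
  then show "sets ((Gauss :: 'a measure) \<Otimes>\<^sub>M (Gauss :: 'b measure)) = sets borel"
    by (simp only: borel_prod)
  show "finite_measure (Gauss :: ('a \<times> 'b) measure)"
    using prob_space_Gauss by (rule prob_space.finite_measure)
  fix l u :: "'a \<times> 'b"
  obtain l1 l2 where l: "l = (l1, l2)" by (cases l)
  obtain u1 u2 where u: "u = (u1, u2)" by (cases u)
  interpret pb: prob_space "Gauss :: 'b measure" by (rule prob_space_Gauss)
  have disj: "(\<lambda>v. (v, 0::'b)) ` Basis \<inter> Pair (0::'a) ` Basis = {}"
    by (auto simp: nonzero_Basis)
  have "emeasure (Gauss :: ('a \<times> 'b) measure) (box l u) = (\<Prod>c\<in>Basis. G1 (l \<bullet> c) (u \<bullet> c))"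
    by (rule Gauss_box)
  also have "\<dots> = (\<Prod>c\<in>(\<lambda>v. (v, 0::'b)) ` Basis. G1 (l \<bullet> c) (u \<bullet> c)) * (\<Prod>c\<in>Pair (0::'a) ` Basis. G1 (l \<bullet> c) (u \<bullet> c))"
    unfolding Basis_prod_def using disj by (intro prod.union_disjoint) auto
  also have "(\<Prod>c\<in>(\<lambda>v. (v, 0::'b)) ` Basis. G1 (l \<bullet> c) (u \<bullet> c)) = (\<Prod>b\<in>Basis. G1 (l1 \<bullet> b) (u1 \<bullet> b))"
    by (subst prod.reindex) (auto simp: inj_on_def l u inner_Pair)
  also have "(\<Prod>c\<in>Pair (0::'a) ` Basis. G1 (l \<bullet> c) (u \<bullet> c)) = (\<Prod>b\<in>Basis. G1 (l2 \<bullet> b) (u2 \<bullet> b))"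
    by (subst prod.reindex) (auto simp: inj_on_def l u inner_Pair)
  also have "(\<Prod>b\<in>Basis. G1 (l1 \<bullet> b) (u1 \<bullet> b)) * (\<Prod>b\<in>Basis. G1 (l2 \<bullet> b) (u2 \<bullet> b))
      = emeasure (Gauss :: 'a measure) (box l1 u1) * emeasure (Gauss :: 'b measure) (box l2 u2)"
    by (simp add: Gauss_box)
  also have "\<dots> = emeasure ((Gauss :: 'a measure) \<Otimes>\<^sub>M (Gauss :: 'b measure)) (box l1 u1 \<times> box l2 u2)"
    by (rule pb.emeasure_pair_measure_Times[symmetric]) simp_all
  also have "\<dots> = emeasure ((Gauss :: 'a measure) \<Otimes>\<^sub>M (Gauss :: 'b measure)) (box l u)"
    by (simp add: l u box_pair)
  finally show "emeasure (Gauss :: ('a \<times> 'b) measure) (box l u) = emeasure ((Gauss :: 'a measure) \<Otimes>\<^sub>M (Gauss :: 'b measure)) (box l u)" .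
qed

lemma Gauss_linear_eq:
  fixes f g :: "'a::euclidean_space \<Rightarrow> 'c::euclidean_space" and f' g' :: "'c \<Rightarrow> 'a"
  assumes lf: "linear f" and lg: "linear g" and lf': "linear f'" and lg': "linear g'"
    and af: "\<And>x y. f x \<bullet> y = x \<bullet> f' y" and ag: "\<And>x y. g x \<bullet> y = x \<bullet> g' y"
    and nrm: "\<And>y. norm (f' y) = norm (g' y)"
  shows "distr Gauss borel f = distr Gauss borel g"
proof -
  obtain Q where Q: "orthogonal_transformation Q" "\<And>y. Q (f' y) = g' y"
    using orth_exists[OF lf' lg' nrm] by blast
  define P where "P = inv Q"
  have oP: "orthogonal_transformation P" unfolding P_def using Q(1) by (rule orthogonal_transformation_inv)
  have QP: "Q (P x) = x" for x
    unfolding P_def using orthogonal_transformation_surj[OF Q(1)] by (simp add: surj_f_inv_f)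
  have gfP: "g x = f (P x)" for x
  proof -
    have *: "g x \<bullet> y = f (P x) \<bullet> y" for y
    proof -
      have "g x \<bullet> y = x \<bullet> g' y" by (rule ag)
      also have "\<dots> = Q (P x) \<bullet> Q (f' y)" by (simp add: QP Q(2))
      also have "\<dots> = P x \<bullet> f' y" using Q(1) by (simp add: orthogonal_transformation_def)
      also have "\<dots> = f (P x) \<bullet> y" by (simp add: af)
      finally show ?thesis .
    qed
    have "(g x - f (P x)) \<bullet> (g x - f (P x)) = 0"
      by (simp add: inner_diff_left *)
    then show ?thesis by simp
  qed
  then have "g = f \<circ> P" by auto
  have mf: "f \<in> borel_measurable borel" using lf by (rule linear_borel_measurable)
  have mP: "P \<in> borel_measurable Gauss"
    using oP by (simp add: linear_borel_measurable orthogonal_transformation_linear)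
  have "distr Gauss borel g = distr Gauss borel (f \<circ> P)" by (simp add: \<open>g = f \<circ> P\<close>)
  also have "\<dots> = distr (distr Gauss borel P) borel f" using mf mP by (simp add: distr_distr)
  also have "\<dots> = distr Gauss borel f" by (simp add: Gauss_orth[OF oP])
  finally show ?thesis by simp
qed


lemma transpose_add': "transpose (A + B) = transpose A + transpose (B :: real^'n^'m)"
  by (simp add: transpose_def vec_eq_iff)

lemma psd_comb:
  fixes S D :: "real^'n^'n"
  assumes "psd S" "psd D" "0 \<le> c"
  shows "psd (c *\<^sub>R S + D)"
  using assms unfolding psd_def
  by (simp add: transpose_add' transpose_scalar matrix_vector_mult_add_rdistrib
      scaleR_matrix_vector_assoc[symmetric] inner_add_right)

lemma psd_scaled_id: "0 \<le> c \<Longrightarrow> psd (c *\<^sub>R (mat 1 :: real^'n^'n))"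
  unfolding psd_def by (simp add: transpose_scalar transpose_mat scaleR_matrix_vector_assoc[symmetric])

definition sqm :: "real^'n^'n \<Rightarrow> real^'n^'n" where
  "sqm S = (SOME A :: real^'n^'n. A ** transpose A = S)"

lemma sqm: "psd S \<Longrightarrow> sqm S ** transpose (sqm S) = S"
  unfolding sqm_def using psd_has_root by (rule someI_ex)

lemma gauss_vec_Gauss: "gauss_vec m S = distr Gauss borel (\<lambda>z. m + sqm S *v z)"
  unfolding gauss_vec_def sqm_def by (simp add: std_gauss_vec_eq)

lemma mv_measurable[measurable]: "(\<lambda>z. (A :: real^'n^'m) *v z) \<in> borel_measurable borel"
  by (intro linear_borel_measurable matrix_vector_mul_linear)

lemma Gauss_subprob: "(Gauss :: 'a::euclidean_space measure) \<in> space (subprob_algebra borel)"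
proof -
  have "prob_space (Gauss :: 'a measure)" by (rule prob_space_Gauss)
  then show ?thesis by (simp add: space_subprob_algebra prob_space_imp_subprob_space)
qed

lemma bind_Gauss_pair:
  fixes F :: "'a::euclidean_space \<Rightarrow> 'b::euclidean_space"
    and H :: "'b \<Rightarrow> 'c::euclidean_space \<Rightarrow> 'd::euclidean_space"
  assumes mF[measurable]: "F \<in> borel_measurable borel"
    and mH[measurable]: "(\<lambda>(x, z). H x z) \<in> borel_measurable (borel \<Otimes>\<^sub>M borel)"
  shows "bind (distr (Gauss::'a measure) borel F) (\<lambda>e. distr (Gauss::'c measure) borel (H e))
       = distr ((Gauss::'a measure) \<Otimes>\<^sub>M (Gauss::'c measure)) borel (\<lambda>(x, z). H (F x) z)"
proof -
  interpret pc: prob_space "Gauss :: 'c measure" by (rule prob_space_Gauss)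
  have mK: "(\<lambda>e. distr (Gauss::'c measure) borel (H e)) \<in> measurable borel (subprob_algebra borel)"
  proof (rule measurable_distr2[where g="\<lambda>_. Gauss" and M=borel])
    show "case_prod H \<in> borel \<Otimes>\<^sub>M borel \<rightarrow>\<^sub>M borel" by (rule mH)
    show "(\<lambda>_. Gauss :: 'c measure) \<in> borel \<rightarrow>\<^sub>M subprob_algebra borel"
      using Gauss_subprob by (rule measurable_const)
  qed
  have mF': "F \<in> measurable (Gauss :: 'a measure) borel" by simp
  have mKF: "(\<lambda>x. distr (Gauss::'c measure) borel (H (F x))) \<in> measurable (Gauss :: 'a measure) (subprob_algebra borel)"
    using measurable_compose[OF mF' mK] by (simp add: o_def)
  have "bind (distr (Gauss::'a measure) borel F) (\<lambda>e. distr (Gauss::'c measure) borel (H e))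
      = bind (Gauss::'a measure) (\<lambda>x. distr (Gauss::'c measure) borel (H (F x)))"
    by (rule bind_distr[OF mF' mK]) simp
  also have "\<dots> = distr ((Gauss::'a measure) \<Otimes>\<^sub>M (Gauss::'c measure)) borel (\<lambda>(x, z). H (F x) z)"
  proof (rule measure_eqI)
    show "sets (bind (Gauss::'a measure) (\<lambda>x. distr (Gauss::'c measure) borel (H (F x)))) =
        sets (distr ((Gauss::'a measure) \<Otimes>\<^sub>M (Gauss::'c measure)) borel (\<lambda>(x, z). H (F x) z))"
      by (subst sets_bind[where N=borel]) auto
    fix A assume "A \<in> sets (bind (Gauss::'a measure) (\<lambda>x. distr (Gauss::'c measure) borel (H (F x))))"
    then have A[measurable]: "A \<in> sets borel" by (subst (asm) sets_bind[where N=borel]) auto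
    have mPhi: "(\<lambda>(x, z). H (F x) z) \<in> measurable ((Gauss::'a measure) \<Otimes>\<^sub>M (Gauss::'c measure)) borel"
    proof -
      have "sets ((Gauss::'a measure) \<Otimes>\<^sub>M (Gauss::'c measure)) = sets (borel \<Otimes>\<^sub>M borel)"
        by (intro sets_pair_measure_cong) simp_all
      moreover have "(\<lambda>(x, z). H (F x) z) \<in> measurable ((borel::'a measure) \<Otimes>\<^sub>M (borel::'c measure)) borel"
        by measurable
      ultimately show ?thesis using measurable_cong_sets by blast
    qed
    have "emeasure (bind (Gauss::'a measure) (\<lambda>x. distr (Gauss::'c measure) borel (H (F x)))) A
        = (\<integral>\<^sup>+x. emeasure (distr (Gauss::'c measure) borel (H (F x))) A \<partial>Gauss)"
      by (rule emeasure_bind[OF _ mKF A]) simp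
    also have "\<dots> = (\<integral>\<^sup>+x. \<integral>\<^sup>+z. indicator A (H (F x) z) \<partial>Gauss \<partial>Gauss)"
    proof (rule nn_integral_cong)
      fix x
      have mHx: "H (F x) \<in> measurable (Gauss::'c measure) borel" by simp
      have "emeasure (distr (Gauss::'c measure) borel (H (F x))) A = (\<integral>\<^sup>+z. indicator A z \<partial>distr (Gauss::'c measure) borel (H (F x)))"
        by (rule nn_integral_indicator[symmetric]) simp
      also have "\<dots> = (\<integral>\<^sup>+z. indicator A (H (F x) z) \<partial>Gauss)"
        by (rule nn_integral_distr[OF mHx]) simp
      finally show "emeasure (distr (Gauss::'c measure) borel (H (F x))) A = (\<integral>\<^sup>+z. indicator A (H (F x) z) \<partial>Gauss)" .
    qed
    also have "\<dots> = (\<integral>\<^sup>+p. indicator A ((\<lambda>(x, z). H (F x) z) p) \<partial>((Gauss::'a measure) \<Otimes>\<^sub>M (Gauss::'c measure)))"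
    proof -
      have "(\<lambda>p. indicator A ((\<lambda>(x, z). H (F x) z) p) :: ennreal) \<in> borel_measurable ((Gauss::'a measure) \<Otimes>\<^sub>M (Gauss::'c measure))"
        using mPhi A by (intro borel_measurable_indicator' measurable_compose[OF mPhi]) auto
      from pc.nn_integral_fst[OF this] show ?thesis by simp
    qed
    also have "\<dots> = emeasure (distr ((Gauss::'a measure) \<Otimes>\<^sub>M (Gauss::'c measure)) borel (\<lambda>(x, z). H (F x) z)) A"
    proof -
      have "emeasure (distr ((Gauss::'a measure) \<Otimes>\<^sub>M (Gauss::'c measure)) borel (\<lambda>(x, z). H (F x) z)) A
          = (\<integral>\<^sup>+y. indicator A y \<partial>distr ((Gauss::'a measure) \<Otimes>\<^sub>M (Gauss::'c measure)) borel (\<lambda>(x, z). H (F x) z))"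
        by (rule nn_integral_indicator[symmetric]) simp
      also have "\<dots> = (\<integral>\<^sup>+p. indicator A ((\<lambda>(x, z). H (F x) z) p) \<partial>((Gauss::'a measure) \<Otimes>\<^sub>M (Gauss::'c measure)))"
        by (rule nn_integral_distr[OF mPhi]) simp
      finally show ?thesis by simp
    qed
    finally show "emeasure (bind (Gauss::'a measure) (\<lambda>x. distr (Gauss::'c measure) borel (H (F x)))) A =
        emeasure (distr ((Gauss::'a measure) \<Otimes>\<^sub>M (Gauss::'c measure)) borel (\<lambda>(x, z). H (F x) z)) A" .
  qed
  finally show ?thesis .
qed


lemma norm_eqI_inner: "x \<bullet> x = y \<bullet> y \<Longrightarrow> norm x = norm y"
  by (simp add: norm_eq_sqrt_inner)

lemma quad_root: "(transpose A *v y) \<bullet> (transpose A *v y) = y \<bullet> ((A ** transpose A) *v y)"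
  for A :: "real^'n^'n"
  using matrix_adj[of "transpose A" y "transpose A *v y"]
  by (simp only: transpose_transpose matrix_vector_mul_assoc)

lemma gauss_conv:
  fixes mu m0 :: "real^'n" and S D :: "real^'n^'n" and g :: real
  assumes S: "psd S" and D: "psd D"
  shows "bind (gauss_vec mu S) (\<lambda>e. gauss_vec (m0 + g *\<^sub>R e) D) = gauss_vec (m0 + g *\<^sub>R mu) (g\<^sup>2 *\<^sub>R S + D)"
proof -
  define A where "A = sqm S"
  define B where "B = sqm D"
  define C where "C = sqm (g\<^sup>2 *\<^sub>R S + D)"
  have AA: "A ** transpose A = S" unfolding A_def using S by (rule sqm)
  have BB: "B ** transpose B = D" unfolding B_def using D by (rule sqm)
  have CC: "C ** transpose C = g\<^sup>2 *\<^sub>R S + D" unfolding C_def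
    by (rule sqm[OF psd_comb[OF S D]]) simp
  define c where "c = m0 + g *\<^sub>R mu"
  define Lf where "Lf p = g *\<^sub>R (A *v fst p) + B *v snd p" for p :: "(real^'n) \<times> (real^'n)"
  define Lg where "Lg p = C *v fst p" for p :: "(real^'n) \<times> (real^'n)"
  define Lf' where "Lf' y = (g *\<^sub>R (transpose A *v y), transpose B *v y)" for y :: "real^'n"
  define Lg' where "Lg' y = (transpose C *v y, 0 :: real^'n)" for y :: "real^'n"
  have linLf: "linear Lf" unfolding Lf_def
    by (rule linearI) (simp_all add: matrix_vector_right_distrib matrix_scaleR_vector_ac scaleR_matrix_vector_assoc[symmetric] algebra_simps)
  have linLg: "linear Lg" unfolding Lg_def
    by (rule linearI) (simp_all add: matrix_vector_right_distrib matrix_scaleR_vector_ac scaleR_matrix_vector_assoc[symmetric] algebra_simps)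
  have linLf': "linear Lf'" unfolding Lf'_def
    by (rule linearI) (simp_all add: matrix_vector_right_distrib matrix_scaleR_vector_ac scaleR_matrix_vector_assoc[symmetric] algebra_simps)
  have linLg': "linear Lg'" unfolding Lg'_def
    by (rule linearI) (simp_all add: matrix_vector_right_distrib matrix_scaleR_vector_ac scaleR_matrix_vector_assoc[symmetric] algebra_simps)
  have adjf: "Lf p \<bullet> y = p \<bullet> Lf' y" for p y
    unfolding Lf_def Lf'_def by (cases p) (simp add: inner_add_left inner_Pair matrix_adj)
  have adjg: "Lg p \<bullet> y = p \<bullet> Lg' y" for p y
    unfolding Lg_def Lg'_def by (cases p) (simp add: inner_Pair matrix_adj)
  have nrm: "norm (Lf' y) = norm (Lg' y)" for y
  proof (rule norm_eqI_inner)
    have "Lf' y \<bullet> Lf' y = g\<^sup>2 * (y \<bullet> (S *v y)) + y \<bullet> (D *v y)"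
      unfolding Lf'_def inner_Pair inner_scaleR_left inner_scaleR_right quad_root AA BB
      by (simp add: power2_eq_square)
    also have "\<dots> = y \<bullet> ((g\<^sup>2 *\<^sub>R S + D) *v y)"
      by (simp add: matrix_vector_mult_add_rdistrib scaleR_matrix_vector_assoc[symmetric] inner_add_right)
    also have "\<dots> = Lg' y \<bullet> Lg' y"
      unfolding Lg'_def inner_Pair quad_root CC by simp
    finally show "Lf' y \<bullet> Lf' y = Lg' y \<bullet> Lg' y" .
  qed
  have mLf[measurable]: "Lf \<in> borel_measurable borel" by (rule linear_borel_measurable[OF linLf])
  have mLg[measurable]: "Lg \<in> borel_measurable borel" by (rule linear_borel_measurable[OF linLg])
  have GG: "(Gauss :: ((real^'n) \<times> (real^'n)) measure) = Gauss \<Otimes>\<^sub>M Gauss" by (rule Gauss_pair)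
  have "bind (gauss_vec mu S) (\<lambda>e. gauss_vec (m0 + g *\<^sub>R e) D)
      = bind (distr Gauss borel (\<lambda>z. mu + A *v z)) (\<lambda>e. distr Gauss borel (\<lambda>z. m0 + g *\<^sub>R e + B *v z))"
    by (simp add: gauss_vec_Gauss A_def B_def)
  also have "\<dots> = distr ((Gauss :: (real^'n) measure) \<Otimes>\<^sub>M (Gauss :: (real^'n) measure)) borel
      (\<lambda>(x, z). m0 + g *\<^sub>R (mu + A *v x) + B *v z)"
    by (rule bind_Gauss_pair[where F="\<lambda>z. mu + A *v z" and H="\<lambda>e z. m0 + g *\<^sub>R e + B *v z"]) measurable
  also have "(\<lambda>(x, z). m0 + g *\<^sub>R (mu + A *v x) + B *v z) = (\<lambda>p. c + Lf p)"
    unfolding c_def Lf_def by (auto simp: algebra_simps)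
  also have "distr ((Gauss :: (real^'n) measure) \<Otimes>\<^sub>M (Gauss :: (real^'n) measure)) borel (\<lambda>p. c + Lf p)
      = distr (distr Gauss borel Lf) borel (\<lambda>v. c + v)"
    unfolding GG[symmetric] by (subst distr_distr) (auto simp: o_def)
  also have "distr Gauss borel Lf = distr Gauss borel Lg"
    by (rule Gauss_linear_eq[OF linLf linLg linLf' linLg' adjf adjg nrm])
  also have "distr (distr Gauss borel Lg) borel (\<lambda>v. c + v) = distr ((Gauss :: (real^'n) measure) \<Otimes>\<^sub>M (Gauss :: (real^'n) measure)) borel (\<lambda>p. c + C *v fst p)"
    unfolding GG[symmetric] by (subst distr_distr) (auto simp: o_def Lg_def)
  also have "\<dots> = distr (distr ((Gauss :: (real^'n) measure) \<Otimes>\<^sub>M (Gauss :: (real^'n) measure)) Gauss fst) borel (\<lambda>z. c + C *v z)"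
    by (subst distr_distr) (auto simp: o_def)
  also have "distr ((Gauss :: (real^'n) measure) \<Otimes>\<^sub>M (Gauss :: (real^'n) measure)) Gauss fst = Gauss"
    by (rule prob_space.distr_pair_fst[OF prob_space_Gauss])
  also have "distr Gauss borel (\<lambda>z. c + C *v z) = gauss_vec (m0 + g *\<^sub>R mu) (g\<^sup>2 *\<^sub>R S + D)"
    by (simp add: gauss_vec_Gauss C_def c_def)
  finally show ?thesis .
qed

definition mixP :: "nat \<Rightarrow> (nat \<Rightarrow> real) \<Rightarrow> nat measure" where
  "mixP K \<pi> = density (count_space {1..K}) (\<lambda>k. ennreal (\<pi> k))"

lemma space_mixP[simp]: "space (mixP K \<pi>) = {1..K}" by (simp add: mixP_def)

lemma measurable_mixP: "(f \<in> measurable (mixP K \<pi>) N) \<longleftrightarrow> (f \<in> {1..K} \<rightarrow> space N)"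
proof -
  have "measurable (mixP K \<pi>) N = measurable (count_space {1..K}) N"
    unfolding mixP_def by (rule measurable_cong_sets) simp_all
  then show ?thesis by (simp add: measurable_count_space_eq1)
qed

lemma mixture_bind:
  fixes M :: "nat \<Rightarrow> (real^'n) measure"
  assumes K: "1 \<le> K" and Mp: "\<And>k. k \<in> {1..K} \<Longrightarrow> prob_space (M k)"
    and Ms: "\<And>k. k \<in> {1..K} \<Longrightarrow> sets (M k) = sets borel"
  shows "mixture K \<pi> M = bind (mixP K \<pi>) M"
proof -
  have ne: "space (mixP K \<pi>) \<noteq> {}" using K by auto
  have mM: "M \<in> measurable (mixP K \<pi>) (subprob_algebra borel)"
    unfolding measurable_mixP using Mp Ms by (auto simp: space_subprob_algebra prob_space_imp_subprob_space)
  have sB: "sets (bind (mixP K \<pi>) M) = sets borel"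
    by (rule sets_bind[OF _ ne]) (simp add: Ms)
  have spB: "space (bind (mixP K \<pi>) M) = UNIV"
    using sets_eq_imp_space_eq[OF sB] by simp
  have em: "emeasure (bind (mixP K \<pi>) M) A = (\<Sum>k=1..K. ennreal (\<pi> k) * emeasure (M k) A)"
    if A: "A \<in> sets borel" for A
  proof -
    have "emeasure (bind (mixP K \<pi>) M) A = (\<integral>\<^sup>+k. emeasure (M k) A \<partial>mixP K \<pi>)"
      by (rule emeasure_bind[OF ne mM A])
    also have "\<dots> = (\<integral>\<^sup>+k. ennreal (\<pi> k) * emeasure (M k) A \<partial>count_space {1..K})"
      unfolding mixP_def by (subst nn_integral_density) auto
    also have "\<dots> = (\<Sum>k=1..K. ennreal (\<pi> k) * emeasure (M k) A)"
      by (rule nn_integral_count_space_finite) simp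
    finally show ?thesis .
  qed
  have "mixture K \<pi> M = measure_of UNIV (sets borel) (emeasure (bind (mixP K \<pi>) M))"
    unfolding mixture_def
  proof (rule measure_of_eq)
    show "sets borel \<subseteq> Pow UNIV" by simp
    fix a assume "a \<in> sigma_sets UNIV (sets (borel :: (real^'n) measure))"
    then have "a \<in> sets borel" using sets.sigma_sets_eq[of "borel :: (real^'n) measure"] by simp
    then show "(\<Sum>k=1..K. ennreal (\<pi> k) * emeasure (M k) a) = emeasure (bind (mixP K \<pi>) M) a"
      by (simp add: em)
  qed
  also have "\<dots> = bind (mixP K \<pi>) M"
    using measure_of_of_measure[of "bind (mixP K \<pi>) M"] by (simp add: spB sB)
  finally show ?thesis .
qed


lemma gauss_vec_prob: "prob_space (gauss_vec m S)"
proof -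
  have "(\<lambda>z. m + sqm S *v z) \<in> borel_measurable borel" by measurable
  then show ?thesis unfolding gauss_vec_Gauss by (intro prob_space.prob_space_distr prob_space_Gauss) simp
qed

lemma sets_gauss_vec[simp, measurable_cong]: "sets (gauss_vec m S) = sets borel"
  unfolding gauss_vec_Gauss by simp

lemma gauss_vec_subprob: "gauss_vec m S \<in> space (subprob_algebra borel)"
  by (simp add: space_subprob_algebra prob_space_imp_subprob_space gauss_vec_prob)

lemma gauss_kernel_measurable:
  "(\<lambda>e. gauss_vec (m0 + g *\<^sub>R e) D) \<in> measurable borel (subprob_algebra borel)"
proof -
  have "(\<lambda>e. distr Gauss borel (\<lambda>z. m0 + g *\<^sub>R e + sqm D *v z)) \<in> measurable borel (subprob_algebra borel)"
  proof (rule measurable_distr2[where g="\<lambda>_. Gauss" and M=borel])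
    show "(\<lambda>(e, z). m0 + g *\<^sub>R e + sqm D *v z) \<in> borel \<Otimes>\<^sub>M borel \<rightarrow>\<^sub>M borel" by measurable
    show "(\<lambda>_. Gauss) \<in> borel \<rightarrow>\<^sub>M subprob_algebra borel" using Gauss_subprob by (rule measurable_const)
  qed
  then show ?thesis by (simp add: gauss_vec_Gauss)
qed

theorem theorem1:
  fixes T t K :: nat and \<beta> \<sigma> \<pi> :: "nat \<Rightarrow> real"
    and xt :: "real^'n"
    and mu :: "nat \<Rightarrow> real^'n \<Rightarrow> nat \<Rightarrow> real^'n"
    and Sig :: "nat \<Rightarrow> real^'n \<Rightarrow> nat \<Rightarrow> real^'n^'n"
  assumes beta: "\<forall>i\<in>{1..T}. 0 < \<beta> i \<and> \<beta> i < 1"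
    and sigma_nonneg: "\<sigma> t \<ge> 0"
    and sigma_bound: "1 - alpha_bar \<beta> (t-1) - (\<sigma> t)\<^sup>2 \<ge> 0"
    and t_range: "t \<in> {2..T}"
    and pi_range: "\<forall>k\<in>{1..K}. 0 \<le> \<pi> k \<and> \<pi> k \<le> 1"
    and pi_sum: "(\<Sum>k=1..K. \<pi> k) = 1"
    and Sig_psd: "\<forall>k\<in>{1..K}. psd (Sig k xt t)"
  shows
    "(let p_eps = mixture K \<pi> (\<lambda>k. gauss_vec (mu k xt t) (Sig k xt t));
          lam = sqrt (1 - alpha_bar \<beta> (t-1) - (\<sigma> t)\<^sup>2);
          gam = lam - sqrt (1 - alpha_bar \<beta> t) / sqrt (alpha \<beta> t);
          x0hat = (\<lambda>k. (1 / sqrt (alpha_bar \<beta> t)) *\<^sub>R (xt - sqrt (1 - alpha_bar \<beta> t) *\<^sub>R mu k xt t))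
      in bind p_eps (\<lambda>eps. ddim_cond \<beta> \<sigma> t xt
             ((1 / sqrt (alpha_bar \<beta> t)) *\<^sub>R (xt - sqrt (1 - alpha_bar \<beta> t) *\<^sub>R eps)))
         = mixture K \<pi> (\<lambda>k. gauss_vec
             (sqrt (alpha_bar \<beta> (t-1)) *\<^sub>R x0hat k + lam *\<^sub>R mu k xt t)
             (gam\<^sup>2 *\<^sub>R Sig k xt t + (\<sigma> t)\<^sup>2 *\<^sub>R mat 1)))"
proof -
  have t2: "2 \<le> t" "t \<le> T" using t_range by auto
  have bt: "0 < \<beta> i \<and> \<beta> i < 1" if "i \<in> {1..T}" for i using beta that by blast
  define a0 where "a0 = alpha_bar \<beta> (t-1)"
  define ab where "ab = alpha_bar \<beta> t"
  define al where "al = alpha \<beta> t"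
  have al: "0 < al" "al < 1" using bt[of t] t2 unfolding al_def alpha_def by auto
  have a0pos: "0 < a0" unfolding a0_def alpha_bar_def
    by (rule prod_pos) (use bt t2 in \<open>auto simp: alpha_def\<close>)
  have a0le: "a0 \<le> 1" unfolding a0_def alpha_bar_def
    by (rule prod_le_1) (use bt t2 in \<open>fastforce simp: alpha_def\<close>)
  have abeq: "ab = al * a0"
  proof -
    have "t = Suc (t - 1)" using t2 by simp
    then have "alpha_bar \<beta> t = alpha \<beta> (Suc (t-1)) * alpha_bar \<beta> (t-1)"
      unfolding alpha_bar_def by (metis le_add1 plus_1_eq_Suc prod.nat_ivl_Suc')
    then show ?thesis unfolding ab_def al_def a0_def using \<open>t = Suc (t - 1)\<close> by simp
  qed
  have abpos: "0 < ab" using abeq al a0pos by simp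
  have ab1: "ab < 1"
  proof -
    have "al * a0 \<le> al" using al a0le mult_left_mono[of a0 1 al] by simp
    then show ?thesis using abeq al by linarith
  qed
  have K1: "1 \<le> K" using pi_sum by (cases K) auto
  define L where "L = sqrt (1 - a0 - (\<sigma> t)\<^sup>2)"
  define g where "g = L - sqrt (1 - ab) / sqrt al"
  define m0 where "m0 = (1 / sqrt al) *\<^sub>R xt"
  define D where "D = (\<sigma> t)\<^sup>2 *\<^sub>R (mat 1 :: real^'n^'n)"
  have sab: "sqrt ab = sqrt al * sqrt a0" using abeq by (simp add: real_sqrt_mult)
  have s1: "sqrt (1 - ab) > 0" using ab1 by simp
  have sal: "sqrt al > 0" using al by simp
  have sa0: "sqrt a0 > 0" using a0pos by simp
  have key2: "sqrt a0 *\<^sub>R ((1 / sqrt ab) *\<^sub>R (xt - sqrt (1 - ab) *\<^sub>R e)) + L *\<^sub>R e = m0 + g *\<^sub>R e" for e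
  proof -
    have comp: "sqrt a0 * (1 / (sqrt al * sqrt a0) * (x - sqrt (1 - ab) * y)) + L * y
        = 1 / sqrt al * x + (L - sqrt (1 - ab) / sqrt al) * y" for x y
      using sal sa0 by (simp add: field_simps)
    have "\<forall>i. (xt $ i - sqrt (1 - ab) * e $ i) / sqrt al + L * e $ i =
          xt $ i / sqrt al + (L - sqrt (1 - ab) / sqrt al) * e $ i"
      using sal by (simp add: field_simps)
    then show ?thesis using a0pos
      by (simp add: vec_eq_iff m0_def g_def sab)
  qed
  have key: "sqrt a0 *\<^sub>R ((1 / sqrt ab) *\<^sub>R (xt - sqrt (1 - ab) *\<^sub>R e))
      + L *\<^sub>R ((1 / sqrt (1 - ab)) *\<^sub>R (xt - sqrt ab *\<^sub>R ((1 / sqrt ab) *\<^sub>R (xt - sqrt (1 - ab) *\<^sub>R e))))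
      = m0 + g *\<^sub>R e" for e
  proof -
    have "sqrt ab *\<^sub>R ((1 / sqrt ab) *\<^sub>R (xt - sqrt (1 - ab) *\<^sub>R e)) = xt - sqrt (1 - ab) *\<^sub>R e"
      using abpos by simp
    moreover have "(1 / sqrt (1 - ab)) *\<^sub>R (xt - (xt - sqrt (1 - ab) *\<^sub>R e)) = e"
      using s1 by simp
    ultimately show ?thesis using key2[of e] by simp
  qed
  have Sk: "psd (Sig k xt t)" if "k \<in> {1..K}" for k using Sig_psd that by blast
  have pD: "psd D" unfolding D_def by (rule psd_scaled_id) simp
  have kern: "(\<lambda>eps. ddim_cond \<beta> \<sigma> t xt ((1 / sqrt (alpha_bar \<beta> t)) *\<^sub>R (xt - sqrt (1 - alpha_bar \<beta> t) *\<^sub>R eps)))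
      = (\<lambda>e. gauss_vec (m0 + g *\<^sub>R e) D)"
    unfolding ddim_cond_def a0_def[symmetric] ab_def[symmetric] L_def[symmetric] D_def[symmetric] key
    by (rule refl)
  have rhs: "(\<lambda>k. gauss_vec
             (sqrt (alpha_bar \<beta> (t-1)) *\<^sub>R ((1 / sqrt (alpha_bar \<beta> t)) *\<^sub>R (xt - sqrt (1 - alpha_bar \<beta> t) *\<^sub>R mu k xt t))
               + sqrt (1 - alpha_bar \<beta> (t-1) - (\<sigma> t)\<^sup>2) *\<^sub>R mu k xt t)
             ((sqrt (1 - alpha_bar \<beta> (t-1) - (\<sigma> t)\<^sup>2) - sqrt (1 - alpha_bar \<beta> t) / sqrt (alpha \<beta> t))\<^sup>2 *\<^sub>R Sig k xt t + (\<sigma> t)\<^sup>2 *\<^sub>R mat 1))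
      = (\<lambda>k. gauss_vec (m0 + g *\<^sub>R mu k xt t) (g\<^sup>2 *\<^sub>R Sig k xt t + D))"
    unfolding a0_def[symmetric] ab_def[symmetric] al_def[symmetric] L_def[symmetric] g_def[symmetric] D_def[symmetric] key2
    by (rule refl)
  define Mk where "Mk k = gauss_vec (mu k xt t) (Sig k xt t)" for k
  define Nk where "Nk k = gauss_vec (m0 + g *\<^sub>R mu k xt t) (g\<^sup>2 *\<^sub>R Sig k xt t + D)" for k
  have mMk: "Mk \<in> measurable (mixP K \<pi>) (subprob_algebra borel)"
    unfolding measurable_mixP Mk_def using gauss_vec_subprob by auto
  have "bind (mixture K \<pi> Mk) (\<lambda>e. gauss_vec (m0 + g *\<^sub>R e) D) = bind (bind (mixP K \<pi>) Mk) (\<lambda>e. gauss_vec (m0 + g *\<^sub>R e) D)"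
    by (subst mixture_bind[OF K1]) (simp_all add: Mk_def gauss_vec_prob)
  also have "\<dots> = bind (mixP K \<pi>) (\<lambda>k. bind (Mk k) (\<lambda>e. gauss_vec (m0 + g *\<^sub>R e) D))"
    by (rule bind_assoc[OF mMk gauss_kernel_measurable])
  also have "\<dots> = bind (mixP K \<pi>) Nk"
    by (rule bind_cong) (simp_all add: Mk_def Nk_def gauss_conv[OF Sk pD])
  also have "\<dots> = mixture K \<pi> Nk"
    by (subst mixture_bind[OF K1]) (simp_all add: Nk_def gauss_vec_prob)
  finally have main: "bind (mixture K \<pi> Mk) (\<lambda>e. gauss_vec (m0 + g *\<^sub>R e) D) = mixture K \<pi> Nk" .
  show ?thesis
    unfolding Let_def kern rhs using main unfolding Mk_def Nk_def by simp
qed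

end
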